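(* Let $V$ be a complex normed vector space and $L\in l^{\infty}(V)^*$. The following are equivalent: (i) $L$ is a Banach limit functional; (ii) $|L(x)|\le p(x)$ for all $x\in l^{\infty}(V)$.
   Context: $\mathbb{N}=\{1,2,3,\dots\}$. $l^{\infty}(V)$ is the space of bounded sequences $x=\{x_n\}_{n=1}^\infty$ in $V$ with norm $\|x\|_\infty=\sup_n\|x_n\|_V$. $T$ is the left shift: $T\{x_1,x_2,x_3,\dots\}=\{x_2,x_3,\dots\}$. A Banach limit functional is a bounded linear functional $L$ on $l^\infty(V)$ such that $\|L\|\le 1$ and $L(Tx)=L(x)$ for all $x\in l^\infty(V)$. For $x\in l^\infty(V)$, $p(x):=\lim_{n\to\infty}\left(\sup_{j\in\mathbb{N}}\frac1n\left\|\sum_{i=0}^{n-1}x_{i+j}\right\|_V\right)$ (this limit exists). *)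

theory Defs
  imports "HOL-Analysis.Analysis"
begin

text \<open>Complex normed vector spaces: a real normed vector space carrying a compatible
  complex scalar multiplication (the HOL distribution has no such class).\<close>
class complex_normed_vector = real_normed_vector +
  fixes scaleC :: "complex \<Rightarrow> 'a \<Rightarrow> 'a" (infixr \<open>*\<^sub>C\<close> 75)
  assumes scaleC_add_right: "c *\<^sub>C (x + y) = c *\<^sub>C x + c *\<^sub>C y"
    and scaleC_add_left: "(b + c) *\<^sub>C x = b *\<^sub>C x + c *\<^sub>C x"
    and scaleC_scaleC: "b *\<^sub>C (c *\<^sub>C x) = (b * c) *\<^sub>C x"
    and scaleC_one: "1 *\<^sub>C x = x"
    and scaleC_of_real: "of_real r *\<^sub>C x = r *\<^sub>R x"
    and norm_scaleC: "norm (c *\<^sub>C x) = cmod c * norm x"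

definition linf :: "(nat \<Rightarrow> 'a::real_normed_vector) set" where
  "linf = {x. Bseq x}"

definition sup_norm :: "(nat \<Rightarrow> 'a::real_normed_vector) \<Rightarrow> real" where
  "sup_norm x = (SUP n. norm (x n))"

definition lshift :: "(nat \<Rightarrow> 'a) \<Rightarrow> (nat \<Rightarrow> 'a)" where
  "lshift x = (\<lambda>n. x (Suc n))"

text \<open>Elements of the dual l-infinity(V)^*: bounded complex-linear functionals
  (only their values on l-infinity(V) matter).\<close>
definition linf_dual :: "((nat \<Rightarrow> 'a::complex_normed_vector) \<Rightarrow> complex) set" where
  "linf_dual = {L.
     (\<forall>x\<in>linf. \<forall>y\<in>linf. L (\<lambda>n. x n + y n) = L x + L y) \<and>
     (\<forall>x\<in>linf. \<forall>c. L (\<lambda>n. c *\<^sub>C x n) = c * L x) \<and>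
     (\<exists>K. \<forall>x\<in>linf. cmod (L x) \<le> K * sup_norm x)}"

definition banach_limit :: "((nat \<Rightarrow> 'a::complex_normed_vector) \<Rightarrow> complex) \<Rightarrow> bool" where
  "banach_limit L \<longleftrightarrow>
     L \<in> linf_dual \<and>
     (\<forall>x\<in>linf. cmod (L x) \<le> sup_norm x) \<and>
     (\<forall>x\<in>linf. L (lshift x) = L x)"

definition p_func :: "(nat \<Rightarrow> 'a::real_normed_vector) \<Rightarrow> real" where
  "p_func x = lim (\<lambda>n. SUP j. norm (\<Sum>i<n. x (i + j)) / real n)"

end

theory Submission imports Defs begin
lemma sub_mult:
  fixes b :: "nat \<Rightarrow> real"
  assumes sub: "\<And>m n. b (m+n) \<le> b m + b n"
  shows "b (q*m + r) \<le> real q * b m + b r"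
proof (induction q)
  case 0 then show ?case by simp
next
  case (Suc q)
  have "b (Suc q * m + r) = b (m + (q*m + r))" by (simp add: algebra_simps)
  also have "\<dots> \<le> b m + b (q*m+r)" by (rule sub)
  also have "\<dots> \<le> real (Suc q) * b m + b r" using Suc by (simp add: algebra_simps)
  finally show ?case .
qed

lemma fekete:
  fixes b :: "nat \<Rightarrow> real"
  assumes sub: "\<And>m n. b (m+n) \<le> b m + b n" and nn: "\<And>n. 0 \<le> b n"
  shows "convergent (\<lambda>n. b n / real n)"
proof -
  define S where "S = (\<lambda>n. b n / real n) ` {1..}"
  define l where "l = Inf S"
  have Sne: "S \<noteq> {}" unfolding S_def by auto
  have Sbdd: "bdd_below S" unfolding S_def using nn by (intro bdd_belowI[of _ 0]) auto
  have low: "l \<le> b n / real n" if "n \<ge> 1" for n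
    unfolding l_def by (rule cInf_lower) (use that Sbdd in \<open>auto simp: S_def\<close>)
  have "(\<lambda>n. b n / real n) \<longlonglongrightarrow> l"
  proof (rule LIMSEQ_I)
    fix r :: real assume r: "r > 0"
    have "Inf S < l + r/2" using r l_def by simp
    then obtain s where "s \<in> S" "s < l + r/2" using cInf_lessD[OF Sne] by blast
    then obtain m where m: "m \<ge> 1" "b m / real m < l + r/2" unfolding S_def by auto
    define C where "C = (\<Sum>k<m. b k)"
    have C0: "C \<ge> 0" unfolding C_def using nn by (simp add: sum_nonneg)
    obtain N :: nat where N: "real N > 2 * C / r" using reals_Archimedean2 by blast
    show "\<exists>N. \<forall>n\<ge>N. norm (b n / real n - l) < r"
    proof (intro exI[of _ "max 1 N"] allI impI)
      fix n assume n: "max 1 N \<le> n"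
      hence n1: "n \<ge> 1" and nN: "n \<ge> N" by auto
      have npos: "real n > 0" using n1 by simp
      let ?q = "n div m" and ?r = "n mod m"
      have ndec: "n = ?q*m + ?r" by simp
      have br: "b ?r \<le> C" unfolding C_def
        using m(1) nn by (intro member_le_sum) auto
      have "b n \<le> real ?q * b m + b ?r" using sub_mult[OF sub, of ?q m ?r] ndec by simp
      hence bn: "b n \<le> real ?q * b m + C" using br by simp
      have qm: "real ?q * real m \<le> real n"
        by (metis of_nat_le_iff of_nat_mult div_times_less_eq_dividend)
      have "real ?q * b m * real m \<le> b m * real n"
        using mult_left_mono[OF qm nn[of m]] by (simp add: algebra_simps)
      hence t1: "real ?q * b m / real n \<le> b m / real m"
        using npos m(1) by (simp add: field_simps)
      have t2: "C / real n < r/2"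
      proof -
        have "2 * C / r < real n" using N nN by linarith
        hence "2*C < r * real n" using r by (simp add: field_simps)
        thus ?thesis using npos by (simp add: field_simps)
      qed
      have "b n / real n \<le> real ?q * b m / real n + C / real n"
        using bn npos by (simp add: add_divide_distrib[symmetric] divide_right_mono)
      hence up: "b n / real n < l + r" using t1 t2 m(2) by linarith
      have "l \<le> b n / real n" using low n1 .
      thus "norm (b n / real n - l) < r" using up by simp
    qed
  qed
  thus ?thesis by (rule convergentI)
qed

lemma sum_split_add: "(\<Sum>i<m+n. f i) = (\<Sum>i<m. f i) + (\<Sum>i<n. f (m+i))"
  for f :: "nat \<Rightarrow> 'b::comm_monoid_add"
proof (induction n)
  case 0 show ?case by simp
next
  case (Suc n)
  have "(\<Sum>i<m + Suc n. f i) = (\<Sum>i<m + n. f i) + f (m + n)" by simp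
  also have "\<dots> = (\<Sum>i<m. f i) + ((\<Sum>i<n. f (m+i)) + f (m+n))" using Suc by (simp add: add.assoc)
  also have "\<dots> = (\<Sum>i<m. f i) + (\<Sum>i<Suc n. f (m+i))" by simp
  finally show ?case .
qed

lemma linfI: "(\<And>n. norm (y n) \<le> K) \<Longrightarrow> y \<in> linf"
  unfolding linf_def by (auto intro: BseqI')

lemma linfE: assumes "x \<in> linf" obtains M where "M \<ge> 0" "\<And>n. norm (x n) \<le> M"
proof -
  from assms obtain K where "0 < K" "\<And>n. norm (x n) \<le> K" unfolding linf_def Bseq_def by blast
  then show ?thesis using that[of K] by simp
qed

lemma linf_bdd: "x \<in> linf \<Longrightarrow> bdd_above (range (\<lambda>n. norm (x n)))"
  by (erule linfE) (rule bdd_aboveI2, blast)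

lemma sup_norm_ge: "x \<in> linf \<Longrightarrow> norm (x n) \<le> sup_norm x"
  unfolding sup_norm_def by (rule cSUP_upper[OF _ linf_bdd]) auto

lemma linf_add: "x \<in> linf \<Longrightarrow> y \<in> linf \<Longrightarrow> (\<lambda>n. x n + y n) \<in> linf"
proof -
  assume "x \<in> linf" "y \<in> linf"
  then obtain M N where "\<And>n. norm (x n) \<le> M" "\<And>n. norm (y n) \<le> N" by (metis linfE)
  then show ?thesis by (intro linfI[of _ "M+N"]) (meson add_mono norm_triangle_le)
qed

lemma linf_scaleC: "x \<in> linf \<Longrightarrow> (\<lambda>n. c *\<^sub>C x n) \<in> linf"
proof -
  assume "x \<in> linf"
  then obtain M where M: "\<And>n. norm (x n) \<le> M" by (metis linfE)
  show ?thesis by (rule linfI[of _ "cmod c * M"]) (simp add: norm_scaleC M mult_left_mono)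
qed

lemma linf_shift: "x \<in> linf \<Longrightarrow> (\<lambda>k. x (i + k)) \<in> linf"
  by (erule linfE) (rule linfI, blast)

lemma linf_lshift: "x \<in> linf \<Longrightarrow> lshift x \<in> linf"
  unfolding lshift_def by (erule linfE) (rule linfI, blast)

lemma linf_zero: "(\<lambda>k. 0) \<in> linf" by (rule linfI[of _ 0]) simp

lemma linf_sum: "(\<And>i::nat. y i \<in> linf) \<Longrightarrow> (\<lambda>k. \<Sum>i<n. y i k) \<in> linf"
  by (induction n) (simp_all add: linf_zero linf_add)

lemma scaleC_zero: "(0::complex) *\<^sub>C (v::'a::complex_normed_vector) = 0"
  using scaleC_of_real[of 0 v] by simp

lemma scaleC_m1: "(-1::complex) *\<^sub>C (v::'a::complex_normed_vector) = - v"
  using scaleC_of_real[of "-1" v] by simp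

lemma scaleC_real: "norm (complex_of_real r *\<^sub>C (v::'a::complex_normed_vector)) = \<bar>r\<bar> * norm v"
  by (simp add: norm_scaleC)

context
  fixes L :: "(nat \<Rightarrow> 'a::complex_normed_vector) \<Rightarrow> complex"
  assumes L: "L \<in> linf_dual"
begin

lemma L_add: "x \<in> linf \<Longrightarrow> y \<in> linf \<Longrightarrow> L (\<lambda>n. x n + y n) = L x + L y"
  using L unfolding linf_dual_def by blast

lemma L_scale: "x \<in> linf \<Longrightarrow> L (\<lambda>n. c *\<^sub>C x n) = c * L x"
  using L unfolding linf_dual_def by blast

lemma L_zero: "L (\<lambda>k. 0) = 0"
  using L_scale[OF linf_zero, of 0] by (simp add: scaleC_zero)

lemma L_sum: "(\<And>i::nat. y i \<in> linf) \<Longrightarrow> L (\<lambda>k. \<Sum>i<n. y i k) = (\<Sum>i<n. L (y i))"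
proof (induction n)
  case 0 then show ?case by (simp add: L_zero)
next
  case (Suc n)
  have "L (\<lambda>k. \<Sum>i<Suc n. y i k) = L (\<lambda>k. (\<Sum>i<n. y i k) + y n k)" by simp
  also have "\<dots> = L (\<lambda>k. \<Sum>i<n. y i k) + L (y n)"
    using L_add[OF linf_sum[OF Suc.prems] Suc.prems[of n]] by simp
  finally show ?case using Suc by simp
qed

end

definition bs :: "(nat \<Rightarrow> 'a::real_normed_vector) \<Rightarrow> nat \<Rightarrow> real" where
  "bs x n = (SUP j. norm (\<Sum>i<n. x (i + j)))"

lemma bs_bdd:
  assumes "x \<in> linf" obtains M where "M \<ge> 0" "\<And>n j. norm (\<Sum>i<n. x (i + j)) \<le> real n * M"
proof -
  obtain M where M: "M \<ge> 0" "\<And>n. norm (x n) \<le> M" using assms by (metis linfE)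
  have "norm (\<Sum>i<n. x (i + j)) \<le> real n * M" for n j
    using norm_sum[of "\<lambda>i. x (i+j)" "{..<n}"] sum_bounded_above[of "{..<n}" "\<lambda>i. norm (x (i+j))" M] M
    by simp
  with M show ?thesis using that by blast
qed

lemma bs_bdd_above: "x \<in> linf \<Longrightarrow> bdd_above (range (\<lambda>j. norm (\<Sum>i<n. x (i + j))))"
  by (erule bs_bdd) (rule bdd_aboveI2, blast)

lemma bs_ge: "x \<in> linf \<Longrightarrow> norm (\<Sum>i<n. x (i + j)) \<le> bs x n"
  unfolding bs_def by (rule cSUP_upper[OF _ bs_bdd_above]) auto

lemma bs_nn: "x \<in> linf \<Longrightarrow> 0 \<le> bs x n"
  using bs_ge[where j=0 and n=n] by (meson norm_ge_zero order_trans)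

lemma bs_sub: assumes x: "x \<in> linf" shows "bs x (m + n) \<le> bs x m + bs x n"
  unfolding bs_def[of x "m+n"]
proof (rule cSUP_least)
  fix j
  have "(\<Sum>i<m+n. x (i + j)) = (\<Sum>i<m. x (i + j)) + (\<Sum>i<n. x (i + (m + j)))"
    by (simp add: sum_split_add add.assoc add.left_commute)
  hence "norm (\<Sum>i<m+n. x (i + j)) \<le> norm (\<Sum>i<m. x (i + j)) + norm (\<Sum>i<n. x (i + (m + j)))"
    by (metis norm_triangle_ineq)
  also have "\<dots> \<le> bs x m + bs x n" using bs_ge[OF x] by (intro add_mono) auto
  finally show "norm (\<Sum>i<m+n. x (i + j)) \<le> bs x m + bs x n" .
qed simp

lemma SUP_div:
  fixes f :: "nat \<Rightarrow> real"
  assumes "bdd_above (range f)" and True: "c > 0"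
  shows "(SUP j. f j / c) = (SUP j. f j) / c"
proof -
  have b2: "bdd_above (range (\<lambda>j. f j / c))"
  proof -
    obtain B where "\<And>j. f j \<le> B" using assms by (auto simp: bdd_above_def)
    then have "\<And>j. f j / c \<le> B / c" using True by (simp add: divide_right_mono)
    then show ?thesis by (rule bdd_aboveI2)
  qed
  show ?thesis
  proof (rule antisym)
    show "(SUP j. f j / c) \<le> (SUP j. f j) / c"
      by (rule cSUP_least) (use True cSUP_upper[OF _ assms(1)] in \<open>auto intro: divide_right_mono\<close>)
    have "(SUP j. f j) \<le> c * (SUP j. f j / c)"
    proof (rule cSUP_least)
      fix j
      have "f j / c \<le> (SUP j. f j / c)" by (rule cSUP_upper[OF _ b2]) simp
      thus "f j \<le> c * (SUP j. f j / c)" using True by (simp add: field_simps)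
    qed simp
    thus "(SUP j. f j) / c \<le> (SUP j. f j / c)" using True by (simp add: field_simps)
  qed
qed


lemma a_eq:
  assumes x: "x \<in> linf"
  shows "(\<lambda>n. SUP j. norm (\<Sum>i<n. x (i + j)) / real n) = (\<lambda>n. bs x n / real n)"
proof
  fix n
  show "(SUP j. norm (\<Sum>i<n. x (i + j)) / real n) = bs x n / real n"
  proof (cases "n = 0")
    case True then show ?thesis by simp
  next
    case False
    then show ?thesis unfolding bs_def by (intro SUP_div bs_bdd_above x) simp
  qed
qed

lemma a_lim:
  assumes x: "x \<in> linf"
  shows "(\<lambda>n. SUP j. norm (\<Sum>i<n. x (i + j)) / real n) \<longlonglongrightarrow> p_func x"
proof -
  have "convergent (\<lambda>n. bs x n / real n)"
    by (rule fekete) (use bs_sub[OF x] bs_nn[OF x] in auto)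
  hence c: "convergent (\<lambda>n. SUP j. norm (\<Sum>i<n. x (i + j)) / real n)" using a_eq[OF x] by simp
  show ?thesis unfolding p_func_def using c by (simp add: convergent_LIMSEQ_iff)
qed

lemma sup_norm_le: assumes "y \<in> linf" "\<And>n. norm (y n) \<le> B" shows "sup_norm y \<le> B"
  unfolding sup_norm_def using assms(2) by (intro cSUP_least) auto

lemma sup_norm_scale: "sup_norm (\<lambda>k. complex_of_real (1 / real n) *\<^sub>C S k) = (SUP j. norm (S j :: 'a::complex_normed_vector) / real n)"
proof -
  have "norm (complex_of_real (1 / real n) *\<^sub>C S k) = norm (S k) / real n" for k
  proof -
    have "norm (complex_of_real (1 / real n) *\<^sub>C S k) = \<bar>1 / real n\<bar> * norm (S k)" by (rule scaleC_real)
    also have "\<dots> = norm (S k) / real n" by simp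
    finally show ?thesis .
  qed
  then show ?thesis unfolding sup_norm_def by simp
qed

theorem mainTheorem8:
  fixes L :: "(nat \<Rightarrow> 'a::complex_normed_vector) \<Rightarrow> complex"
  assumes "L \<in> linf_dual"
  shows "banach_limit L \<longleftrightarrow> (\<forall>x\<in>linf. cmod (L x) \<le> p_func x)"
proof
  assume B: "banach_limit L"
  hence nrm: "\<And>x. x \<in> linf \<Longrightarrow> cmod (L x) \<le> sup_norm x"
    and sh: "\<And>x. x \<in> linf \<Longrightarrow> L (lshift x) = L x" unfolding banach_limit_def by auto
  show "\<forall>x\<in>linf. cmod (L x) \<le> p_func x"
  proof
    fix x :: "nat \<Rightarrow> 'a" assume x: "x \<in> linf"
    have shi: "L (\<lambda>k. x (i + k)) = L x" for i
    proof (induction i)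
      case 0 then show ?case by simp
    next
      case (Suc i)
      have "(\<lambda>k. x (Suc i + k)) = lshift (\<lambda>k. x (i + k))" by (simp add: lshift_def)
      then show ?case using sh[OF linf_shift[OF x, of i]] Suc by simp
    qed
    have le: "cmod (L x) \<le> (SUP j. norm (\<Sum>i<n. x (i + j)) / real n)" if n: "n \<ge> 1" for n
    proof -
      define S where "S = (\<lambda>k. \<Sum>i<n. x (i + k))"
      have S: "S \<in> linf" unfolding S_def by (rule linf_sum) (rule linf_shift[OF x])
      define y where "y = (\<lambda>k. complex_of_real (1 / real n) *\<^sub>C S k)"
      have y: "y \<in> linf" unfolding y_def by (rule linf_scaleC[OF S])
      have "L S = (\<Sum>i<n. L (\<lambda>k. x (i + k)))"
        unfolding S_def by (rule L_sum[OF assms]) (rule linf_shift[OF x])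
      also have "\<dots> = of_nat n * L x" using shi by simp
      finally have LS: "L S = of_nat n * L x" .
      have "L y = complex_of_real (1 / real n) * L S" unfolding y_def by (rule L_scale[OF assms S])
      also have "\<dots> = L x" using LS n by (simp add: field_simps)
      finally have Ly: "L y = L x" .
      have "sup_norm y = (SUP j. norm (\<Sum>i<n. x (i + j)) / real n)"
        unfolding y_def S_def by (rule sup_norm_scale)
      then show ?thesis using nrm[OF y] Ly by simp
    qed
    show "cmod (L x) \<le> p_func x"
      by (rule LIMSEQ_le_const[OF a_lim[OF x]]) (use le in auto)
  qed
next
  assume P: "\<forall>x\<in>linf. cmod (L x) \<le> p_func x"
  have pn: "p_func x \<le> sup_norm x" if x: "x \<in> linf" for x
  proof (rule LIMSEQ_le_const2[OF a_lim[OF x]], intro exI allI impI)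
    fix n :: nat assume n: "n \<ge> 1"
    show "(SUP j. norm (\<Sum>i<n. x (i + j)) / real n) \<le> sup_norm x"
    proof (rule cSUP_least)
      fix j
      have "norm (\<Sum>i<n. x (i + j)) \<le> (\<Sum>i<n. norm (x (i + j)))" by (rule norm_sum)
      also have "\<dots> \<le> real n * sup_norm x"
        using sum_bounded_above[of "{..<n}" "\<lambda>i. norm (x (i+j))" "sup_norm x"] sup_norm_ge[OF x] by simp
      finally show "norm (\<Sum>i<n. x (i + j)) / real n \<le> sup_norm x"
        using n by (simp add: field_simps)
    qed simp
  qed
  have nrm: "\<forall>x\<in>linf. cmod (L x) \<le> sup_norm x" using P pn by (meson order_trans)
  have shift: "\<forall>x\<in>linf. L (lshift x) = L x"
  proof
    fix x :: "nat \<Rightarrow> 'a" assume x: "x \<in> linf"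
    obtain M where M: "M \<ge> 0" "\<And>n. norm (x n) \<le> M" using x by (metis linfE)
    define z where "z = (\<lambda>k. lshift x k + (-1) *\<^sub>C x k)"
    have z: "z \<in> linf" unfolding z_def by (intro linf_add linf_lshift linf_scaleC x)
    have Lz: "L z = L (lshift x) - L x"
      unfolding z_def using L_add[OF assms linf_lshift[OF x] linf_scaleC[OF x]] L_scale[OF assms x, of "-1"]
      by simp
    have zk: "z k = x (Suc k) - x k" for k unfolding z_def lshift_def by (simp add: scaleC_m1)
    have tb: "norm (\<Sum>i<n. z (i + j)) / real n \<le> 2 * M / real n" for n j
    proof -
      have "(\<Sum>i<n. z (i + j)) = (\<Sum>i<n. x (Suc i + j) - x (i + j))" by (simp add: zk)
      also have "\<dots> = x (n + j) - x (0 + j)"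
        by (rule sum_lessThan_telescope[where f = "\<lambda>i. x (i + j)"])
      finally have "norm (\<Sum>i<n. z (i + j)) \<le> norm (x (n + j)) + norm (x j)"
        by (simp add: norm_triangle_ineq4)
      also have "\<dots> \<le> 2 * M" using M(2)[of "n+j"] M(2)[of j] by simp
      finally show ?thesis by (simp add: divide_right_mono)
    qed
    have bdd: "bdd_above (range (\<lambda>j. norm (\<Sum>i<n. z (i + j)) / real n))" for n
      using tb[of _ n] by (rule bdd_aboveI2)
    have bnd: "(SUP j. norm (\<Sum>i<n. z (i + j)) / real n) \<le> 2 * M / real n" for n
      using tb[of _ n] by (intro cSUP_least) auto
    have nn: "0 \<le> (SUP j. norm (\<Sum>i<n. z (i + j)) / real n)" for n
    proof -
      have "norm (\<Sum>i<n. z (i + 0)) / real n \<le> (SUP j. norm (\<Sum>i<n. z (i + j)) / real n)"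
        by (rule cSUP_upper[OF _ bdd]) simp
      moreover have "0 \<le> norm (\<Sum>i<n. z (i + 0)) / real n" by simp
      ultimately show ?thesis by linarith
    qed
    have lim0: "(\<lambda>n. 2 * M / real n) \<longlonglongrightarrow> 0"
      using tendsto_mult[OF tendsto_const[of "2*M"] lim_inverse_n'] by simp
    have "(\<lambda>n. SUP j. norm (\<Sum>i<n. z (i + j)) / real n) \<longlonglongrightarrow> 0"
      by (rule tendsto_sandwich[OF _ _ tendsto_const lim0]) (use nn bnd in auto)
    hence "p_func z = 0" using a_lim[OF z] LIMSEQ_unique by blast
    moreover have "cmod (L z) \<le> p_func z" using P z by blast
    ultimately have "L z = 0" by simp
    thus "L (lshift x) = L x" using Lz by simp
  qed
  show "banach_limit L" unfolding banach_limit_def using assms nrm shift by blast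
qed

end
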